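(* Consider the grid and the operator $Q_{i,j}$ described in the context, fix a species index $l$ with valence $q^l\in\mathbb{R}$, a time step $\Delta t^{n+1}>0$, and a real grid function $\psi^{n+1}=(\psi^{n+1}_{i,j})$, and set $S^{l,n+1}_{i,j}=q^l\psi^{n+1}_{i,j}$. Suppose $c^{l,n}_{i,j}>0$ for all $1\le i\le N_x$, $1\le j\le N_y$, and that $c^{l,n+1}$ satisfies the backward Euler scheme $$h^x_ih^y_j\,\frac{c^{l,n+1}_{i,j}-c^{l,n}_{i,j}}{\Delta t^{n+1}}=Q_{i,j}(c^{l,n+1},S^{l,n+1})\qquad(1\le i\le N_x,\ 1\le j\le N_y).$$ Then $c^{l,n+1}_{i,j}>0$ for all $1\le i\le N_x$, $1\le j\le N_y$.
   Context: Grid on $\Omega=[a,b]\times[c,d]$: $a=x_{1/2}<x_{3/2}<\dots<x_{N_x+1/2}=b$, $c=y_{1/2}<\dots<y_{N_y+1/2}=d$; $x_i=(x_{i-1/2}+x_{i+1/2})/2$, $y_j=(y_{j-1/2}+y_{j+1/2})/2$; $h^x_i=x_{i+1/2}-x_{i-1/2}$, $h^y_j=y_{j+1/2}-y_{j-1/2}$; $h^x_{i+1/2}=x_{i+1}-x_i$ ($1\le i\le N_x-1$), $h^y_{j+1/2}=y_{j+1}-y_j$ ($1\le j\le N_y-1$). For grid functions $c,S$ define fluxes $\widehat g_{x,i+1/2,j}=\frac{c_{i+1,j}e^{S_{i+1,j}}-c_{i,j}e^{S_{i,j}}}{h^x_{i+1/2}}$ ($1\le i\le N_x-1$), $\widehat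 g_{y,i,j+1/2}=\frac{c_{i,j+1}e^{S_{i,j+1}}-c_{i,j}e^{S_{i,j}}}{h^y_{j+1/2}}$ ($1\le j\le N_y-1$), with zero-flux boundary values $\widehat g_{x,1/2,j}=\widehat g_{x,N_x+1/2,j}=\widehat g_{y,i,1/2}=\widehat g_{y,i,N_y+1/2}=0$; harmonic means $e^{-S_{i+1/2,j}}:=\frac{2e^{-S_{i+1,j}}e^{-S_{i,j}}}{e^{-S_{i+1,j}}+e^{-S_{i,j}}}$, $e^{-S_{i,j+1/2}}:=\frac{2e^{-S_{i,j+1}}e^{-S_{i,j}}}{e^{-S_{i,j+1}}+e^{-S_{i,j}}}$ (irrelevant at boundary half-indices, where fluxes vanish); and $$Q_{i,j}(c,S)=h^y_j\big(e^{-S_{i+1/2,j}}\widehat g_{x,i+1/2,j}-e^{-S_{i-1/2,j}}\widehat g_{x,i-1/2,j}\big)+h^x_i\big(e^{-S_{i,j+1/2}}\widehat g_{y,i,j+1/2}-e^{-S_{i,j-1/2}}\widehat g_{y,i,j-1/2}\big).$$ This is a discretization of the Nernst--Planck equation $\partial_tc^l=\nabla\cdot(e^{-q^l\psi}\nabla(c^le^{q^l\psi}))$ with zero-flux boundary conditions; in the full method $\psi^{n+1}$ is coupled to the concentrations through a discretized Poisson equation, here it is an arbitrary given grid function. *)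

theory Defs
  imports "HOL-Analysis.Analysis"
begin

text \<open>Grid on [a,b] x [c,d]: the cell faces are x_{k+1/2} = xf k (k = 0..Nx),
  y_{k+1/2} = yf k (k = 0..Ny); cells are indexed by 1 \<le> i \<le> Nx, 1 \<le> j \<le> Ny.
  Quantities living at half-index k+1/2 are indexed by k.\<close>

definition ctr :: "(nat \<Rightarrow> real) \<Rightarrow> nat \<Rightarrow> real" where
  "ctr f i = (f (i - 1) + f i) / 2"

definition cell_w :: "(nat \<Rightarrow> real) \<Rightarrow> nat \<Rightarrow> real" where
  "cell_w f i = f i - f (i - 1)"

text \<open>h_{i+1/2} = x_{i+1} - x_i, indexed by i.\<close>
definition dual_w :: "(nat \<Rightarrow> real) \<Rightarrow> nat \<Rightarrow> real" where
  "dual_w f i = ctr f (i + 1) - ctr f i"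

text \<open>Flux g_{x,i+1/2,j} indexed by i (0 \<le> i \<le> Nx); zero at the boundary.\<close>
definition flux_x :: "nat \<Rightarrow> (nat \<Rightarrow> real) \<Rightarrow> (nat \<Rightarrow> nat \<Rightarrow> real) \<Rightarrow> (nat \<Rightarrow> nat \<Rightarrow> real)
    \<Rightarrow> nat \<Rightarrow> nat \<Rightarrow> real" where
  "flux_x Nx xf c S i j =
     (if 1 \<le> i \<and> i < Nx
      then (c (i + 1) j * exp (S (i + 1) j) - c i j * exp (S i j)) / dual_w xf i
      else 0)"

definition flux_y :: "nat \<Rightarrow> (nat \<Rightarrow> real) \<Rightarrow> (nat \<Rightarrow> nat \<Rightarrow> real) \<Rightarrow> (nat \<Rightarrow> nat \<Rightarrow> real)
    \<Rightarrow> nat \<Rightarrow> nat \<Rightarrow> real" where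
  "flux_y Ny yf c S i j =
     (if 1 \<le> j \<and> j < Ny
      then (c i (j + 1) * exp (S i (j + 1)) - c i j * exp (S i j)) / dual_w yf j
      else 0)"

text \<open>Harmonic means e^{-S_{i+1/2,j}} (indexed by i) and e^{-S_{i,j+1/2}} (indexed by j).\<close>
definition hm_x :: "(nat \<Rightarrow> nat \<Rightarrow> real) \<Rightarrow> nat \<Rightarrow> nat \<Rightarrow> real" where
  "hm_x S i j = 2 * exp (- S (i + 1) j) * exp (- S i j) / (exp (- S (i + 1) j) + exp (- S i j))"

definition hm_y :: "(nat \<Rightarrow> nat \<Rightarrow> real) \<Rightarrow> nat \<Rightarrow> nat \<Rightarrow> real" where
  "hm_y S i j = 2 * exp (- S i (j + 1)) * exp (- S i j) / (exp (- S i (j + 1)) + exp (- S i j))"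

definition Qop :: "nat \<Rightarrow> nat \<Rightarrow> (nat \<Rightarrow> real) \<Rightarrow> (nat \<Rightarrow> real)
    \<Rightarrow> (nat \<Rightarrow> nat \<Rightarrow> real) \<Rightarrow> (nat \<Rightarrow> nat \<Rightarrow> real) \<Rightarrow> nat \<Rightarrow> nat \<Rightarrow> real" where
  "Qop Nx Ny xf yf c S i j =
     cell_w yf j * (hm_x S i j * flux_x Nx xf c S i j
                    - hm_x S (i - 1) j * flux_x Nx xf c S (i - 1) j)
   + cell_w xf i * (hm_y S i j * flux_y Ny yf c S i j
                    - hm_y S i (j - 1) * flux_y Ny yf c S i (j - 1))"

end

theory Submission
  imports Defs
begin

theorem theorem3:
  fixes Nx Ny :: nat and xf yf :: "nat \<Rightarrow> real"
    and q dt :: real and psi cn cn1 :: "nat \<Rightarrow> nat \<Rightarrow> real"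
  assumes "Nx \<ge> 1" and "Ny \<ge> 1"
    and "\<And>k. k < Nx \<Longrightarrow> xf k < xf (k + 1)"
    and "\<And>k. k < Ny \<Longrightarrow> yf k < yf (k + 1)"
    and "dt > 0"
    and "\<And>i j. 1 \<le> i \<Longrightarrow> i \<le> Nx \<Longrightarrow> 1 \<le> j \<Longrightarrow> j \<le> Ny \<Longrightarrow> cn i j > 0"
    and "\<And>i j. 1 \<le> i \<Longrightarrow> i \<le> Nx \<Longrightarrow> 1 \<le> j \<Longrightarrow> j \<le> Ny \<Longrightarrow>
           cell_w xf i * cell_w yf j * (cn1 i j - cn i j) / dt
             = Qop Nx Ny xf yf cn1 (\<lambda>i j. q * psi i j) i j"
  shows "\<forall>i j. 1 \<le> i \<and> i \<le> Nx \<and> 1 \<le> j \<and> j \<le> Ny \<longrightarrow> cn1 i j > 0"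
proof -
  define S where "S = (\<lambda>i j. q * psi i j)"
  define u where "u = (\<lambda>(i,j). cn1 i j * exp (S i j))"
  define G where "G = {1..Nx} \<times> {1..Ny}"
  have fin: "finite G" unfolding G_def by simp
  have ne: "G \<noteq> {}" using assms(1,2) unfolding G_def by auto
  define m where "m = Min (u ` G)"
  have "m \<in> u ` G" unfolding m_def using fin ne by simp
  then obtain i0 j0 where p: "(i0,j0) \<in> G" and mu: "m = u (i0,j0)" by auto
  have mle: "\<And>x. x \<in> G \<Longrightarrow> m \<le> u x" unfolding m_def using fin by simp
  have i0: "1 \<le> i0" "i0 \<le> Nx" and j0: "1 \<le> j0" "j0 \<le> Ny" using p unfolding G_def by auto
  have dwx: "dual_w xf i > 0" if "1 \<le> i" "i < Nx" for i
  proof -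
    have "xf (i-1) < xf i" using assms(3)[of "i-1"] that by simp
    moreover have "xf i < xf (i+1)" using assms(3)[of i] that by simp
    ultimately show ?thesis unfolding dual_w_def ctr_def by simp
  qed
  have dwy: "dual_w yf j > 0" if "1 \<le> j" "j < Ny" for j
  proof -
    have "yf (j-1) < yf j" using assms(4)[of "j-1"] that by simp
    moreover have "yf j < yf (j+1)" using assms(4)[of j] that by simp
    ultimately show ?thesis unfolding dual_w_def ctr_def by simp
  qed
  have hx: "hm_x S i j > 0" for i j unfolding hm_x_def by (simp add: add_pos_pos)
  have hy: "hm_y S i j > 0" for i j unfolding hm_y_def by (simp add: add_pos_pos)
  have f1: "flux_x Nx xf cn1 S i0 j0 \<ge> 0"
  proof (cases "1 \<le> i0 \<and> i0 < Nx")
    case True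
    have "(i0+1, j0) \<in> G" using True j0 unfolding G_def by auto
    hence "u (i0,j0) \<le> u (i0+1,j0)" using mle mu by auto
    thus ?thesis using True dwx[of i0] unfolding flux_x_def u_def by simp
  qed (auto simp add: flux_x_def)
  have f2: "flux_x Nx xf cn1 S (i0-1) j0 \<le> 0"
  proof (cases "1 \<le> i0 - 1 \<and> i0 - 1 < Nx")
    case True
    have "(i0-1, j0) \<in> G" using True j0 unfolding G_def by auto
    hence "u (i0,j0) \<le> u (i0-1,j0)" using mle mu by auto
    moreover have "i0 - 1 + 1 = i0" using True by linarith
    ultimately show ?thesis using True dwx[of "i0-1"] unfolding flux_x_def u_def
      by (simp add: divide_nonpos_pos)
  qed (auto simp add: flux_x_def)
  have f3: "flux_y Ny yf cn1 S i0 j0 \<ge> 0"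
  proof (cases "1 \<le> j0 \<and> j0 < Ny")
    case True
    have "(i0, j0+1) \<in> G" using True i0 unfolding G_def by auto
    hence "u (i0,j0) \<le> u (i0,j0+1)" using mle mu by auto
    thus ?thesis using True dwy[of j0] unfolding flux_y_def u_def by simp
  qed (auto simp add: flux_y_def)
  have f4: "flux_y Ny yf cn1 S i0 (j0-1) \<le> 0"
  proof (cases "1 \<le> j0 - 1 \<and> j0 - 1 < Ny")
    case True
    have "(i0, j0-1) \<in> G" using True i0 unfolding G_def by auto
    hence "u (i0,j0) \<le> u (i0,j0-1)" using mle mu by auto
    moreover have "j0 - 1 + 1 = j0" using True by linarith
    ultimately show ?thesis using True dwy[of "j0-1"] unfolding flux_y_def u_def
      by (simp add: divide_nonpos_pos)
  qed (auto simp add: flux_y_def)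
  have cwx: "cell_w xf i0 > 0" using assms(3)[of "i0-1"] i0 unfolding cell_w_def by simp
  have cwy: "cell_w yf j0 > 0" using assms(4)[of "j0-1"] j0 unfolding cell_w_def by simp
  have a1: "hm_x S i0 j0 * flux_x Nx xf cn1 S i0 j0 \<ge> 0" using hx[of i0 j0] f1 by simp
  have a2: "hm_x S (i0-1) j0 * flux_x Nx xf cn1 S (i0-1) j0 \<le> 0"
    using hx[of "i0-1" j0] f2 by (simp add: mult_nonneg_nonpos)
  have a3: "hm_y S i0 j0 * flux_y Ny yf cn1 S i0 j0 \<ge> 0" using hy[of i0 j0] f3 by simp
  have a4: "hm_y S i0 (j0-1) * flux_y Ny yf cn1 S i0 (j0-1) \<le> 0"
    using hy[of i0 "j0-1"] f4 by (simp add: mult_nonneg_nonpos)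
  have Q: "Qop Nx Ny xf yf cn1 S i0 j0 \<ge> 0"
    unfolding Qop_def using a1 a2 a3 a4 cwx cwy
    by (intro add_nonneg_nonneg mult_nonneg_nonneg) auto
  hence "cell_w xf i0 * cell_w yf j0 * (cn1 i0 j0 - cn i0 j0) / dt \<ge> 0"
    using assms(7)[OF i0 j0] unfolding S_def by simp
  hence "cell_w xf i0 * cell_w yf j0 * (cn1 i0 j0 - cn i0 j0) \<ge> 0"
    using assms(5) by (simp add: zero_le_divide_iff)
  moreover have "cell_w xf i0 * cell_w yf j0 > 0" using cwx cwy by simp
  ultimately have "cn1 i0 j0 - cn i0 j0 \<ge> 0"
    by (simp add: zero_le_mult_iff)
  hence "cn1 i0 j0 > 0" using assms(6)[OF i0 j0] by simp
  hence mpos: "m > 0" unfolding mu u_def by simp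
  show ?thesis
  proof (intro allI impI)
    fix i j assume h: "1 \<le> i \<and> i \<le> Nx \<and> 1 \<le> j \<and> j \<le> Ny"
    hence "(i,j) \<in> G" unfolding G_def by auto
    hence "u (i,j) > 0" using mle mpos by fastforce
    thus "cn1 i j > 0" unfolding u_def by (simp add: zero_less_mult_iff)
  qed
qed

end
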